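(* If $G$ is a countably infinite connected HE-homogeneous graph, then $G$ is MB-homogeneous.
   Context: All graphs are undirected and loopless; subgraphs are induced. A homomorphism maps adjacent vertices to adjacent vertices; a monomorphism is an injective homomorphism; a bimorphism of $G$ is a bijective endomorphism $G\to G$. $G$ is HE-homogeneous if every homomorphism between finite induced subgraphs of $G$ is the restriction of a surjective endomorphism of $G$; $G$ is MB-homogeneous if every monomorphism between finite induced subgraphs of $G$ is the restriction of a bimorphism of $G$. *)

theory Defs
  imports Main "HOL-Library.Countable_Set"
begin

definition graph :: "'a set \<Rightarrow> ('a \<Rightarrow> 'a \<Rightarrow> bool) \<Rightarrow> bool" where
  "graph V E \<longleftrightarrow> (\<forall>x y. E x y \<longrightarrow> x \<in> V \<and> y \<in> V \<and> E y x) \<and> (\<forall>x. \<not> E x x)"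

definition connected_graph :: "'a set \<Rightarrow> ('a \<Rightarrow> 'a \<Rightarrow> bool) \<Rightarrow> bool" where
  "connected_graph V E \<longleftrightarrow> (\<forall>x\<in>V. \<forall>y\<in>V. E\<^sup>*\<^sup>* x y)"

definition is_hom :: "('a \<Rightarrow> 'a \<Rightarrow> bool) \<Rightarrow> 'a set \<Rightarrow> 'a set \<Rightarrow> ('a \<Rightarrow> 'a) \<Rightarrow> bool" where
  "is_hom E A B f \<longleftrightarrow> f ` A \<subseteq> B \<and> (\<forall>x\<in>A. \<forall>y\<in>A. E x y \<longrightarrow> E (f x) (f y))"

definition is_mono :: "('a \<Rightarrow> 'a \<Rightarrow> bool) \<Rightarrow> 'a set \<Rightarrow> 'a set \<Rightarrow> ('a \<Rightarrow> 'a) \<Rightarrow> bool" where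
  "is_mono E A B f \<longleftrightarrow> is_hom E A B f \<and> inj_on f A"

definition HE_homogeneous :: "'a set \<Rightarrow> ('a \<Rightarrow> 'a \<Rightarrow> bool) \<Rightarrow> bool" where
  "HE_homogeneous V E \<longleftrightarrow>
     (\<forall>A B f. finite A \<and> A \<subseteq> V \<and> finite B \<and> B \<subseteq> V \<and> is_hom E A B f \<longrightarrow>
        (\<exists>g. is_hom E V V g \<and> g ` V = V \<and> (\<forall>x\<in>A. g x = f x)))"

definition MB_homogeneous :: "'a set \<Rightarrow> ('a \<Rightarrow> 'a \<Rightarrow> bool) \<Rightarrow> bool" where
  "MB_homogeneous V E \<longleftrightarrow>
     (\<forall>A B f. finite A \<and> A \<subseteq> V \<and> finite B \<and> B \<subseteq> V \<and> is_mono E A B f \<longrightarrow>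
        (\<exists>g. is_hom E V V g \<and> bij_betw g V V \<and> (\<forall>x\<in>A. g x = f x)))"

end

theory Submission
  imports Defs
begin

lemma gsym: "graph V E \<Longrightarrow> E x y \<Longrightarrow> E y x"
  and gV: "graph V E \<Longrightarrow> E x y \<Longrightarrow> x \<in> V \<and> y \<in> V"
  and girr: "graph V E \<Longrightarrow> \<not> E x x"
  by (auto simp: graph_def)

lemma HE_ext:
  "HE_homogeneous V E \<Longrightarrow> finite A \<Longrightarrow> A \<subseteq> V \<Longrightarrow> finite B \<Longrightarrow> B \<subseteq> V \<Longrightarrow> is_hom E A B f
   \<Longrightarrow> \<exists>g. is_hom E V V g \<and> g ` V = V \<and> (\<forall>x\<in>A. g x = f x)"
  unfolding HE_homogeneous_def by blast

lemma cone:
  assumes G: "graph V E" and H: "HE_homogeneous V E" and fX: "finite X" and XV: "X \<subseteq> V"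
    and dX: "\<forall>x\<in>X. E d x" and de: "E d e" and eX: "e \<notin> X"
  shows "\<exists>z. E z d \<and> (\<forall>x\<in>X. E z x)"
proof -
  define f where "f = (\<lambda>y. if y = e then d else y)"
  have eV: "e \<in> V" "d \<in> V" using G de by (auto simp: graph_def)
  have hom: "is_hom E (insert e X) (insert d X) f"
    unfolding is_hom_def
  proof (intro conjI ballI impI)
    show "f ` insert e X \<subseteq> insert d X" by (auto simp: f_def)
  next
    fix x y assume x: "x \<in> insert e X" and y: "y \<in> insert e X" and Exy: "E x y"
    show "E (f x) (f y)"
    proof (cases "x = e")
      case True
      then have "y \<noteq> e" using Exy girr[OF G] by auto
      then have "y \<in> X" using y by auto
      then show ?thesis using True \<open>y \<noteq> e\<close> dX by (auto simp: f_def)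
    next
      case False
      then have "x \<in> X" using x by auto
      show ?thesis
      proof (cases "y = e")
        case True
        then have "E d x" using dX \<open>x \<in> X\<close> by auto
        then have "E x d" using gsym[OF G] by blast
        then show ?thesis using True False by (auto simp: f_def)
      next
        case False2: False
        then show ?thesis using False Exy by (auto simp: f_def)
      qed
    qed
  qed
  obtain g where g: "is_hom E V V g" "g ` V = V" "\<forall>x\<in>insert e X. g x = f x"
    using HE_ext[OF H _ _ _ _ hom] fX XV eV by auto
  have "E (g d) (g e)" using g(1) de eV unfolding is_hom_def by blast
  moreover have "g e = d" using g(3) by (simp add: f_def)
  moreover have "\<forall>x\<in>X. E (g d) x"
  proof
    fix x assume xX: "x \<in> X"
    have "E (g d) (g x)" using g(1) dX xX XV eV unfolding is_hom_def by blast
    moreover have "g x = x" using g(3) xX eX by (auto simp: f_def)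
    ultimately show "E (g d) x" by simp
  qed
  ultimately show ?thesis by auto
qed

lemma path_leaves:
  assumes "E\<^sup>*\<^sup>* a b" "a \<in> K" "b \<notin> K"
  shows "\<exists>u\<in>K. \<exists>t. t \<notin> K \<and> E u t"
  using assms by (induction rule: rtranclp_induct) blast+

lemma clique_ext:
  assumes G: "graph V E" and H: "HE_homogeneous V E" and C: "connected_graph V E"
    and inf: "infinite V" and fK: "finite K" and KV: "K \<subseteq> V" and Kne: "K \<noteq> {}"
    and cl: "\<forall>a\<in>K. \<forall>b\<in>K. a \<noteq> b \<longrightarrow> E a b"
  shows "\<exists>z. \<forall>a\<in>K. E z a"
proof -
  obtain k where k: "k \<in> K" using Kne by blast
  have "infinite (V - K)" using inf fK by (rule Diff_infinite_finite[rotated])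
  then have "V - K \<noteq> {}"
  proof (intro notI)
    assume "infinite (V - K)" "V - K = {}"
    then show False by simp
  qed
  then obtain y where y: "y \<in> V" "y \<notin> K" by blast
  have "E\<^sup>*\<^sup>* k y" using C k KV y unfolding connected_graph_def by blast
  then have "\<exists>u\<in>K. \<exists>t. t \<notin> K \<and> E u t" by (rule path_leaves[OF _ k y(2)])
  then obtain u t where u: "u \<in> K" "t \<notin> K" "E u t" by blast
  have dX: "\<forall>x\<in>K - {u}. E u x"
  proof
    fix x assume "x \<in> K - {u}"
    then have "x \<in> K" "u \<noteq> x" by auto
    then show "E u x" using cl u(1) by simp
  qed
  have tX: "t \<notin> K - {u}" using u(2) by blast
  have fX: "finite (K - {u})" using fK by simp
  have XV: "K - {u} \<subseteq> V" using KV by blast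
  obtain z where z: "E z u" "\<forall>x\<in>K-{u}. E z x"
    using cone[OF G H fX XV dX u(3) tX] by blast
  have "\<forall>a\<in>K. E z a"
  proof
    fix a assume "a \<in> K"
    then show "E z a" using z by (cases "a = u") auto
  qed
  then show ?thesis by blast
qed

lemma inf_deg:
  assumes G: "graph V E" and H: "HE_homogeneous V E" and C: "connected_graph V E"
    and inf: "infinite V" and xV: "x \<in> V"
  shows "infinite {y. E x y}"
proof
  assume fin: "finite {y. E x y}"
  have "\<forall>n. \<exists>K. finite K \<and> card K = n \<and> K \<subseteq> {y. E x y} \<and> (\<forall>a\<in>K. \<forall>b\<in>K. a \<noteq> b \<longrightarrow> E a b)"
  proof
    fix n show "\<exists>K. finite K \<and> card K = n \<and> K \<subseteq> {y. E x y} \<and> (\<forall>a\<in>K. \<forall>b\<in>K. a \<noteq> b \<longrightarrow> E a b)"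
    proof (induction n)
      case 0 show ?case by (intro exI[of _ "{}"]) auto
    next
      case (Suc n)
      then obtain K where K: "finite K" "card K = n" "K \<subseteq> {y. E x y}"
        "\<forall>a\<in>K. \<forall>b\<in>K. a \<noteq> b \<longrightarrow> E a b" by blast
      have xK: "x \<notin> K" using K(3) girr[OF G] by auto
      have KV: "insert x K \<subseteq> V" using K(3) gV[OF G] xV by auto
      have cl: "\<forall>a\<in>insert x K. \<forall>b\<in>insert x K. a \<noteq> b \<longrightarrow> E a b"
        using K(3,4) gsym[OF G] by auto
      obtain z where z: "\<forall>a\<in>insert x K. E z a"
        using clique_ext[OF G H C inf _ KV _ cl] K(1) by auto
      have zK: "z \<notin> K" using z girr[OF G] by auto
      have "E x z" using z gsym[OF G] by auto
      show ?case
      proof (intro exI[of _ "insert z K"] conjI)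
        show "finite (insert z K)" using K(1) by simp
        show "card (insert z K) = Suc n" using K(1,2) zK by simp
        show "insert z K \<subseteq> {y. E x y}" using K(3) \<open>E x z\<close> by auto
        show "\<forall>a\<in>insert z K. \<forall>b\<in>insert z K. a \<noteq> b \<longrightarrow> E a b"
          using K(4) z gsym[OF G] by auto
      qed
    qed
  qed
  then obtain K where "finite K" "card K = Suc (card {y. E x y})" "K \<subseteq> {y. E x y}" by blast
  then have "card K \<le> card {y. E x y}" using fin card_mono by blast
  then show False using \<open>card K = _\<close> by simp
qed

lemma many_cn:
  assumes G: "graph V E" and H: "HE_homogeneous V E" and C: "connected_graph V E"
    and inf: "infinite V" and fX: "finite X" and XV: "X \<subseteq> V" and z0: "z0 \<in> V"
    and z0X: "\<forall>x\<in>X. E z0 x" and fF: "finite F"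
  shows "\<exists>w\<in>V. w \<notin> F \<and> (\<forall>x\<in>X. E w x)"
proof -
  have "\<forall>n. \<exists>T. finite T \<and> card T = n \<and> T \<subseteq> V \<and> (\<forall>t\<in>T. \<forall>x\<in>X. E t x) \<and> (\<exists>z\<in>V. \<forall>y\<in>X \<union> T. E z y)"
  proof
    fix n show "\<exists>T. finite T \<and> card T = n \<and> T \<subseteq> V \<and> (\<forall>t\<in>T. \<forall>x\<in>X. E t x) \<and> (\<exists>z\<in>V. \<forall>y\<in>X \<union> T. E z y)"
    proof (induction n)
      case 0 show ?case using z0 z0X by (intro exI[of _ "{}"]) auto
    next
      case (Suc n)
      then obtain T z where T: "finite T" "card T = n" "T \<subseteq> V" "\<forall>t\<in>T. \<forall>x\<in>X. E t x"
        and z: "z \<in> V" "\<forall>y\<in>X \<union> T. E z y" by blast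
      have zT: "z \<notin> T" using z(2) girr[OF G] by auto
      have "infinite {y. E z y}" using inf_deg[OF G H C inf z(1)] .
      then have "infinite ({y. E z y} - (X \<union> T))" using Diff_infinite_finite fX T(1) by auto
      then have "{y. E z y} - (X \<union> T) \<noteq> {}" by (metis infinite_imp_nonempty)
      then obtain e where e: "E z e" "e \<notin> X \<union> T" by auto
      obtain z' where z': "E z' z" "\<forall>y\<in>X \<union> T. E z' y"
        using cone[OF G H, of "X \<union> T" z e] fX T(1) XV T(3) z(2) e by auto
      have "z' \<in> V" using z'(1) gV[OF G] by auto
      show ?case
      proof (intro exI[of _ "insert z T"] conjI)
        show "finite (insert z T)" using T(1) by simp
        show "card (insert z T) = Suc n" using T(1,2) zT by simp
        show "insert z T \<subseteq> V" using T(3) z(1) by auto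
        show "\<forall>t\<in>insert z T. \<forall>x\<in>X. E t x" using T(4) z(2) by auto
        show "\<exists>u\<in>V. \<forall>y\<in>X \<union> insert z T. E u y"
          using \<open>z' \<in> V\<close> z' by auto
      qed
    qed
  qed
  then obtain T where T: "finite T" "card T = Suc (card F)" "T \<subseteq> V" "\<forall>t\<in>T. \<forall>x\<in>X. E t x" by blast
  have "\<not> T \<subseteq> F"
  proof
    assume "T \<subseteq> F"
    then have "card T \<le> card F" using fF card_mono by blast
    then show False using T(2) by simp
  qed
  then obtain w where "w \<in> T" "w \<notin> F" by auto
  then show ?thesis using T by auto
qed

definition inv_st :: "'a set \<Rightarrow> ('a \<Rightarrow> 'a \<Rightarrow> bool) \<Rightarrow> 'a set \<times> ('a \<Rightarrow> 'a) \<Rightarrow> bool" where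
  "inv_st V E s \<longleftrightarrow> finite (fst s) \<and> fst s \<subseteq> V \<and> snd s ` fst s \<subseteq> V \<and> inj_on (snd s) (fst s)
     \<and> (\<forall>x\<in>fst s. \<forall>y\<in>fst s. E x y \<longrightarrow> E (snd s x) (snd s y))"

definition ext_st :: "'a set \<times> ('a \<Rightarrow> 'a) \<Rightarrow> 'a set \<times> ('a \<Rightarrow> 'a) \<Rightarrow> bool" where
  "ext_st s s' \<longleftrightarrow> fst s \<subseteq> fst s' \<and> (\<forall>a\<in>fst s. snd s' a = snd s a)"

lemma ext_trans: "ext_st s1 s2 \<Longrightarrow> ext_st s2 s3 \<Longrightarrow> ext_st s1 s3"
  by (auto simp: ext_st_def)

lemma forth_step:
  assumes G: "graph V E" and H: "HE_homogeneous V E" and C: "connected_graph V E"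
    and inf: "infinite V" and inv: "inv_st V E (D, f)" and xV: "x \<in> V"
  shows "\<exists>s'. inv_st V E s' \<and> ext_st (D,f) s' \<and> x \<in> fst s'"
proof (cases "x \<in> D")
  case True then show ?thesis using inv by (intro exI[of _ "(D,f)"]) (auto simp: ext_st_def)
next
  case False
  from inv have D: "finite D" "D \<subseteq> V" "f ` D \<subseteq> V" "inj_on f D"
    "\<forall>a\<in>D. \<forall>b\<in>D. E a b \<longrightarrow> E (f a) (f b)" by (auto simp: inv_st_def)
  have hom: "is_hom E D (f ` D) f" using D(5) by (auto simp: is_hom_def)
  obtain g where g: "is_hom E V V g" "g ` V = V" "\<forall>a\<in>D. g a = f a"
    using HE_ext[OF H D(1) D(2) _ D(3) hom] D(1) by auto
  have gx: "g x \<in> V" using g(2) xV by auto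
  have cn: "\<forall>y\<in>f ` {a\<in>D. E x a}. E (g x) y"
  proof
    fix y assume "y \<in> f ` {a\<in>D. E x a}"
    then obtain a where a: "a \<in> D" "E x a" "y = f a" by auto
    have "E (g x) (g a)" using g(1) a D(2) xV unfolding is_hom_def by blast
    then show "E (g x) y" using g(3) a by auto
  qed
  have fin: "finite (f ` {a\<in>D. E x a})" using D(1) by simp
  have sub: "f ` {a\<in>D. E x a} \<subseteq> V" using D(3) by auto
  obtain w where w: "w \<in> V" "w \<notin> f ` D" "\<forall>y\<in>f ` {a\<in>D. E x a}. E w y"
    using many_cn[OF G H C inf fin sub gx cn, of "f ` D"] D(1) by auto
  have w2: "\<forall>a\<in>D. E x a \<longrightarrow> E w (f a)" using w(3) by auto
  have w3: "\<forall>a\<in>D. E a x \<longrightarrow> E (f a) w" using w2 gsym[OF G] by blast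
  show ?thesis
  proof (intro exI[of _ "(insert x D, f(x := w))"] conjI)
    have inj: "inj_on (f(x := w)) (insert x D)"
      using D(4) w(2) False by (auto simp: inj_on_def)
    have hom': "\<forall>a\<in>insert x D. \<forall>b\<in>insert x D. E a b \<longrightarrow> E ((f(x := w)) a) ((f(x := w)) b)"
    proof (intro ballI impI)
      fix a b assume a: "a \<in> insert x D" and b: "b \<in> insert x D" and ab: "E a b"
      show "E ((f(x := w)) a) ((f(x := w)) b)"
      proof (cases "a = x")
        case True
        then have "b \<noteq> x" using ab girr[OF G] by blast
        then show ?thesis using True b ab w2 by simp
      next
        case False
        then have aD: "a \<in> D" using a by simp
        show ?thesis
        proof (cases "b = x")
          case True then show ?thesis using False aD ab w3 by simp
        next
          case False2: False then show ?thesis using False aD b ab D(5) by simp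
        qed
      qed
    qed
    have img: "(f(x := w)) ` insert x D \<subseteq> V" using D(3) w(1) False by auto
    show "inv_st V E (insert x D, f(x := w))"
      unfolding inv_st_def fst_conv snd_conv
      using D(1,2) xV inj hom' img by blast
    show "ext_st (D,f) (insert x D, f(x := w))" using False by (auto simp: ext_st_def)
    show "x \<in> fst (insert x D, f(x := w))" by simp
  qed
qed

lemma back_step:
  assumes G: "graph V E" and H: "HE_homogeneous V E" and inv: "inv_st V E (D, f)" and yV: "y \<in> V"
  shows "\<exists>s'. inv_st V E s' \<and> ext_st (D,f) s' \<and> y \<in> snd s' ` fst s'"
proof (cases "y \<in> f ` D")
  case True then show ?thesis using inv by (intro exI[of _ "(D,f)"]) (auto simp: ext_st_def)
next
  case False
  from inv have D: "finite D" "D \<subseteq> V" "f ` D \<subseteq> V" "inj_on f D"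
    "\<forall>a\<in>D. \<forall>b\<in>D. E a b \<longrightarrow> E (f a) (f b)" by (auto simp: inv_st_def)
  have hom: "is_hom E D (f ` D) f" using D(5) by (auto simp: is_hom_def)
  obtain g where g: "is_hom E V V g" "g ` V = V" "\<forall>a\<in>D. g a = f a"
    using HE_ext[OF H D(1) D(2) _ D(3) hom] D(1) by auto
  obtain v where v: "v \<in> V" "g v = y" using g(2) yV by (metis imageE)
  have vD: "v \<notin> D" using False g(3) v by force
  have w2: "\<forall>a\<in>D. E v a \<longrightarrow> E y (f a)"
  proof (intro ballI impI)
    fix a assume a: "a \<in> D" "E v a"
    have "E (g v) (g a)" using g(1) a D(2) v unfolding is_hom_def by blast
    then show "E y (f a)" using g(3) a v by auto
  qed
  have w3: "\<forall>a\<in>D. E a v \<longrightarrow> E (f a) y" using w2 gsym[OF G] by blast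
  show ?thesis
  proof (intro exI[of _ "(insert v D, f(v := y))"] conjI)
    have inj: "inj_on (f(v := y)) (insert v D)"
      using D(4) False vD by (auto simp: inj_on_def)
    have hom': "\<forall>a\<in>insert v D. \<forall>b\<in>insert v D. E a b \<longrightarrow> E ((f(v := y)) a) ((f(v := y)) b)"
    proof (intro ballI impI)
      fix a b assume a: "a \<in> insert v D" and b: "b \<in> insert v D" and ab: "E a b"
      show "E ((f(v := y)) a) ((f(v := y)) b)"
      proof (cases "a = v")
        case True
        then have "b \<noteq> v" using ab girr[OF G] by blast
        then show ?thesis using True b ab w2 by simp
      next
        case False
        then have aD: "a \<in> D" using a by simp
        show ?thesis
        proof (cases "b = v")
          case True then show ?thesis using False aD ab w3 by simp
        next
          case False2: False then show ?thesis using False aD b ab D(5) by simp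
        qed
      qed
    qed
    have img: "(f(v := y)) ` insert v D \<subseteq> V" using D(3) yV vD by auto
    show "inv_st V E (insert v D, f(v := y))"
      unfolding inv_st_def fst_conv snd_conv
      using D(1,2) v(1) inj hom' img by blast
    show "ext_st (D,f) (insert v D, f(v := y))" using vD by (auto simp: ext_st_def)
    show "y \<in> snd (insert v D, f(v := y)) ` fst (insert v D, f(v := y))" by simp
  qed
qed

lemma step:
  assumes G: "graph V E" and H: "HE_homogeneous V E" and C: "connected_graph V E"
    and inf: "infinite V" and inv: "inv_st V E s" and xV: "x \<in> V"
  shows "\<exists>s'. inv_st V E s' \<and> ext_st s s' \<and> x \<in> fst s' \<and> x \<in> snd s' ` fst s'"
proof -
  obtain D f where s: "s = (D,f)" by (cases s)
  obtain s1 where s1: "inv_st V E s1" "ext_st s s1" "x \<in> fst s1"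
    using forth_step[OF G H C inf _ xV] inv s by blast
  obtain D1 f1 where s1e: "s1 = (D1, f1)" by (cases s1)
  obtain s2 where s2: "inv_st V E s2" "ext_st s1 s2" "x \<in> snd s2 ` fst s2"
    using back_step[OF G H _ xV] s1(1) s1e by blast
  have "ext_st s s2" using ext_trans s1(2) s2(2) by blast
  moreover have "x \<in> fst s2" using s1(3) s2(2) by (auto simp: ext_st_def)
  ultimately show ?thesis using s2 by blast
qed

primrec seq :: "'a set \<Rightarrow> ('a \<Rightarrow> 'a \<Rightarrow> bool) \<Rightarrow> (nat \<Rightarrow> 'a) \<Rightarrow> 'a set \<times> ('a \<Rightarrow> 'a) \<Rightarrow> nat \<Rightarrow> 'a set \<times> ('a \<Rightarrow> 'a)" where
  "seq V E en s0 0 = s0"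
| "seq V E en s0 (Suc n) = (SOME s'. inv_st V E s' \<and> ext_st (seq V E en s0 n) s' \<and> en n \<in> fst s' \<and> en n \<in> snd s' ` fst s')"

lemma seq_props:
  assumes G: "graph V E" and H: "HE_homogeneous V E" and C: "connected_graph V E"
    and inf: "infinite V" and inv0: "inv_st V E s0" and en: "\<forall>n. en n \<in> V"
  shows "inv_st V E (seq V E en s0 n) \<and> ext_st (seq V E en s0 n) (seq V E en s0 (Suc n))
     \<and> en n \<in> fst (seq V E en s0 (Suc n)) \<and> en n \<in> snd (seq V E en s0 (Suc n)) ` fst (seq V E en s0 (Suc n))"
proof (induction n)
  case 0
  have "\<exists>s'. inv_st V E s' \<and> ext_st s0 s' \<and> en 0 \<in> fst s' \<and> en 0 \<in> snd s' ` fst s'"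
    using step[OF G H C inf inv0] en by blast
  from someI_ex[OF this] show ?case using inv0 by simp
next
  case (Suc n)
  let ?s = "seq V E en s0 (Suc n)"
  have ex: "\<exists>s'. inv_st V E s' \<and> ext_st (seq V E en s0 n) s' \<and> en n \<in> fst s' \<and> en n \<in> snd s' ` fst s'"
    using step[OF G H C inf] Suc en by blast
  have iv: "inv_st V E ?s"
    using someI_ex[OF ex] by simp
  have "\<exists>s'. inv_st V E s' \<and> ext_st ?s s' \<and> en (Suc n) \<in> fst s' \<and> en (Suc n) \<in> snd s' ` fst s'"
    using step[OF G H C inf iv] en by blast
  from someI_ex[OF this] show ?case using iv by simp
qed


theorem lemma8p1:
  fixes V :: "'a set" and E :: "'a \<Rightarrow> 'a \<Rightarrow> bool"
  assumes "graph V E"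
    and "countable V" and "infinite V"
    and "connected_graph V E"
    and "HE_homogeneous V E"
  shows "MB_homogeneous V E"
proof -
  note G = assms(1) and H = assms(5) and C = assms(4) and inf = assms(3)
  define en where "en = from_nat_into V"
  have Vne: "V \<noteq> {}" using inf by auto
  have en: "\<forall>n. en n \<in> V" using from_nat_into[OF Vne] en_def by simp
  have idx: "\<And>x. x \<in> V \<Longrightarrow> en (to_nat_on V x) = x" using assms(2) en_def by simp
  show ?thesis
    unfolding MB_homogeneous_def
  proof (intro allI impI, elim conjE)
    fix A B f assume fA: "finite A" and AV: "A \<subseteq> V" and fB: "finite B" and BV: "B \<subseteq> V"
      and mono: "is_mono E A B f"
    have inv0: "inv_st V E (A, f)"
      using mono AV fA BV unfolding is_mono_def is_hom_def inv_st_def by auto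
    define S where "S = seq V E en (A,f)"
    have P: "\<And>n. inv_st V E (S n) \<and> ext_st (S n) (S (Suc n)) \<and> en n \<in> fst (S (Suc n))
        \<and> en n \<in> snd (S (Suc n)) ` fst (S (Suc n))"
      unfolding S_def using seq_props[OF G H C inf inv0 en] by blast
    have mono_S: "\<And>m n. m \<le> n \<Longrightarrow> ext_st (S m) (S n)"
    proof -
      fix m n :: nat assume "m \<le> n"
      then show "ext_st (S m) (S n)"
      proof (induction rule: dec_induct)
        case base show ?case by (simp add: ext_st_def)
      next
        case (step k) then show ?case using P ext_trans by blast
      qed
    qed
    define g where "g x = snd (S (Suc (to_nat_on V x))) x" for x
    have inS: "\<And>x. x \<in> V \<Longrightarrow> x \<in> fst (S (Suc (to_nat_on V x)))"
    proof -
      fix x assume "x \<in> V"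
      then show "x \<in> fst (S (Suc (to_nat_on V x)))" using P[of "to_nat_on V x"] idx by simp
    qed
    have gS: "\<And>x k. x \<in> V \<Longrightarrow> x \<in> fst (S k) \<Longrightarrow> g x = snd (S k) x"
    proof -
      fix x k assume xV: "x \<in> V" and xk: "x \<in> fst (S k)"
      define i where "i = Suc (to_nat_on V x)"
      have e1: "ext_st (S i) (S (max i k))" by (rule mono_S) simp
      have e2: "ext_st (S k) (S (max i k))" by (rule mono_S) simp
      have "snd (S (max i k)) x = snd (S i) x" using e1 inS[OF xV] unfolding i_def ext_st_def by blast
      moreover have "snd (S (max i k)) x = snd (S k) x" using e2 xk unfolding ext_st_def by blast
      ultimately show "g x = snd (S k) x" by (simp add: g_def i_def)
    qed
    have both: "\<And>x y. x \<in> V \<Longrightarrow> y \<in> V \<Longrightarrow> \<exists>k. x \<in> fst (S k) \<and> y \<in> fst (S k)"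
    proof -
      fix x y assume xV: "x \<in> V" and yV: "y \<in> V"
      define k where "k = max (Suc (to_nat_on V x)) (Suc (to_nat_on V y))"
      have e1: "ext_st (S (Suc (to_nat_on V x))) (S k)" by (rule mono_S) (simp add: k_def)
      have e2: "ext_st (S (Suc (to_nat_on V y))) (S k)" by (rule mono_S) (simp add: k_def)
      have "x \<in> fst (S k)" using e1 inS[OF xV] unfolding ext_st_def by blast
      moreover have "y \<in> fst (S k)" using e2 inS[OF yV] unfolding ext_st_def by blast
      ultimately show "\<exists>k. x \<in> fst (S k) \<and> y \<in> fst (S k)" by blast
    qed
    have invk: "\<And>k. inv_st V E (S k)" using P by blast
    have img: "g ` V \<subseteq> V"
    proof
      fix z assume "z \<in> g ` V"
      then obtain x where x: "x \<in> V" "z = g x" by blast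
      have "g x = snd (S (Suc (to_nat_on V x))) x" by (simp add: g_def)
      moreover have "snd (S (Suc (to_nat_on V x))) ` fst (S (Suc (to_nat_on V x))) \<subseteq> V"
        using invk unfolding inv_st_def by blast
      ultimately show "z \<in> V" using x inS[OF x(1)] by blast
    qed
    have hom: "is_hom E V V g"
      unfolding is_hom_def
    proof (intro conjI ballI impI)
      show "g ` V \<subseteq> V" by (rule img)
    next
      fix x y assume xV: "x \<in> V" and yV: "y \<in> V" and xy: "E x y"
      obtain k where k: "x \<in> fst (S k)" "y \<in> fst (S k)" using both[OF xV yV] by blast
      have "E (snd (S k) x) (snd (S k) y)" using invk[of k] k xy unfolding inv_st_def by blast
      then show "E (g x) (g y)" using gS[OF xV k(1)] gS[OF yV k(2)] by simp
    qed
    have inj: "inj_on g V"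
    proof (rule inj_onI)
      fix x y assume xV: "x \<in> V" and yV: "y \<in> V" and xy: "g x = g y"
      obtain k where k: "x \<in> fst (S k)" "y \<in> fst (S k)" using both[OF xV yV] by blast
      have "snd (S k) x = snd (S k) y" using xy gS[OF xV k(1)] gS[OF yV k(2)] by simp
      moreover have "inj_on (snd (S k)) (fst (S k))" using invk[of k] unfolding inv_st_def by blast
      ultimately show "x = y" using k by (meson inj_onD)
    qed
    have surj: "V \<subseteq> g ` V"
    proof
      fix y assume yV: "y \<in> V"
      define n where "n = to_nat_on V y"
      have "en n = y" using idx[OF yV] n_def by simp
      then have "y \<in> snd (S (Suc n)) ` fst (S (Suc n))" using P[of n] by simp
      then obtain v where v: "v \<in> fst (S (Suc n))" "y = snd (S (Suc n)) v" by blast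
      have vV: "v \<in> V" using v(1) invk[of "Suc n"] unfolding inv_st_def by blast
      have "g v = y" using gS[OF vV v(1)] v(2) by simp
      then show "y \<in> g ` V" using vV by blast
    qed
    have agree: "\<forall>x\<in>A. g x = f x"
    proof
      fix x assume xA: "x \<in> A"
      have "S 0 = (A, f)" by (simp add: S_def)
      then have "x \<in> fst (S 0)" "snd (S 0) = f" using xA by auto
      then show "g x = f x" using gS[of x 0] xA AV by auto
    qed
    show "\<exists>g. is_hom E V V g \<and> bij_betw g V V \<and> (\<forall>x\<in>A. g x = f x)"
      using hom inj img surj agree unfolding bij_betw_def by blast
  qed
qed

end
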